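(* Let $P$ be a finite graded poset of rank $r$ (all maximal chains have length $r$) such that $J(P)$ is tCDE. Then \[\mathbb{E}(\mathrm{uni}_{J(P)};\mathrm{ddeg})=\frac{\#P}{r+2}.\]
   Context: $J(P)$ is the poset of order ideals of $P$ ordered by inclusion; $\mathrm{ddeg}(I)$ is the number of elements of $J(P)$ covered by $I$ (equivalently $\#\max(I)$); $\mathrm{uni}_{J(P)}$ is uniform; $\mathbb{E}(\mu;f)=\sum_I f(I)\mathbb{P}(\mu;I)$. $\mathcal{T}^+_p(I)=1$ iff $p\notin I$ and $p$ is minimal in $P\setminus I$; $\mathcal{T}^-_p(I)=1$ iff $p\in I$ and $p$ is maximal in $I$ (else $0$). $\mu$ is toggle-symmetric if $\mathbb{E}(\mu;\mathcal{T}^+_p)=\mathbb{E}(\mu;\mathcal{T}^-_p)$ for all $p\in P$. $J(P)$ is tCDE if $\mathbb{E}(\mu;\mathrm{ddeg})=\mathbb{E}(\mathrm{uni}_{J(P)};\mathrm{ddeg})$ for every toggle-symmetric distribution $\mu$ on $J(P)$. *)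

theory Defs
  imports Main "HOL-Library.Multiset" Complex_Main
begin

definition poset_on :: "'a set \<Rightarrow> ('a \<Rightarrow> 'a \<Rightarrow> bool) \<Rightarrow> bool" where
  "poset_on P le \<longleftrightarrow>
     (\<forall>x\<in>P. le x x) \<and>
     (\<forall>x\<in>P. \<forall>y\<in>P. le x y \<and> le y x \<longrightarrow> x = y) \<and>
     (\<forall>x\<in>P. \<forall>y\<in>P. \<forall>z\<in>P. le x y \<and> le y z \<longrightarrow> le x z)"

definition is_chain :: "'a set \<Rightarrow> ('a \<Rightarrow> 'a \<Rightarrow> bool) \<Rightarrow> 'a set \<Rightarrow> bool" where
  "is_chain P le C \<longleftrightarrow> C \<subseteq> P \<and> (\<forall>x\<in>C. \<forall>y\<in>C. le x y \<or> le y x)"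

definition is_maximal_chain :: "'a set \<Rightarrow> ('a \<Rightarrow> 'a \<Rightarrow> bool) \<Rightarrow> 'a set \<Rightarrow> bool" where
  "is_maximal_chain P le C \<longleftrightarrow>
     is_chain P le C \<and> (\<forall>D. is_chain P le D \<and> C \<subseteq> D \<longrightarrow> D = C)"

(* graded of rank r: every maximal chain has length r, i.e. r+1 elements *)
definition graded_of_rank :: "'a set \<Rightarrow> ('a \<Rightarrow> 'a \<Rightarrow> bool) \<Rightarrow> nat \<Rightarrow> bool" where
  "graded_of_rank P le r \<longleftrightarrow>
     (\<forall>C. is_maximal_chain P le C \<longrightarrow> card C = r + 1)"

definition order_ideals :: "'a set \<Rightarrow> ('a \<Rightarrow> 'a \<Rightarrow> bool) \<Rightarrow> 'a set set" where
  "order_ideals P le = {I. I \<subseteq> P \<and> (\<forall>x\<in>I. \<forall>y\<in>P. le y x \<longrightarrow> y \<in> I)}"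

definition maximal_elems :: "('a \<Rightarrow> 'a \<Rightarrow> bool) \<Rightarrow> 'a set \<Rightarrow> 'a set" where
  "maximal_elems le A = {x\<in>A. \<forall>y\<in>A. le x y \<longrightarrow> y = x}"

definition minimal_elems :: "('a \<Rightarrow> 'a \<Rightarrow> bool) \<Rightarrow> 'a set \<Rightarrow> 'a set" where
  "minimal_elems le A = {x\<in>A. \<forall>y\<in>A. le y x \<longrightarrow> y = x}"

(* ddeg(I) = #max(I) = number of elements of J(P) covered by I *)
definition ddeg :: "('a \<Rightarrow> 'a \<Rightarrow> bool) \<Rightarrow> 'a set \<Rightarrow> real" where
  "ddeg le I = real (card (maximal_elems le I))"

definition toggle_plus :: "'a set \<Rightarrow> ('a \<Rightarrow> 'a \<Rightarrow> bool) \<Rightarrow> 'a \<Rightarrow> 'a set \<Rightarrow> real" where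
  "toggle_plus P le p I = (if p \<notin> I \<and> p \<in> minimal_elems le (P - I) then 1 else 0)"

definition toggle_minus :: "('a \<Rightarrow> 'a \<Rightarrow> bool) \<Rightarrow> 'a \<Rightarrow> 'a set \<Rightarrow> real" where
  "toggle_minus le p I = (if p \<in> I \<and> p \<in> maximal_elems le I then 1 else 0)"

definition is_distribution :: "'a set \<Rightarrow> ('a \<Rightarrow> 'a \<Rightarrow> bool) \<Rightarrow> ('a set \<Rightarrow> real) \<Rightarrow> bool" where
  "is_distribution P le \<mu> \<longleftrightarrow>
     (\<forall>I\<in>order_ideals P le. \<mu> I \<ge> 0) \<and> (\<Sum>I\<in>order_ideals P le. \<mu> I) = 1"

definition expect :: "'a set \<Rightarrow> ('a \<Rightarrow> 'a \<Rightarrow> bool) \<Rightarrow> ('a set \<Rightarrow> real) \<Rightarrow> ('a set \<Rightarrow> real) \<Rightarrow> real" where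
  "expect P le \<mu> f = (\<Sum>I\<in>order_ideals P le. f I * \<mu> I)"

definition uni :: "'a set \<Rightarrow> ('a \<Rightarrow> 'a \<Rightarrow> bool) \<Rightarrow> 'a set \<Rightarrow> real" where
  "uni P le I = 1 / real (card (order_ideals P le))"

definition toggle_symmetric :: "'a set \<Rightarrow> ('a \<Rightarrow> 'a \<Rightarrow> bool) \<Rightarrow> ('a set \<Rightarrow> real) \<Rightarrow> bool" where
  "toggle_symmetric P le \<mu> \<longleftrightarrow>
     (\<forall>p\<in>P. expect P le \<mu> (toggle_plus P le p) = expect P le \<mu> (toggle_minus le p))"

definition tCDE :: "'a set \<Rightarrow> ('a \<Rightarrow> 'a \<Rightarrow> bool) \<Rightarrow> bool" where
  "tCDE P le \<longleftrightarrow>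
     (\<forall>\<mu>. is_distribution P le \<mu> \<and> toggle_symmetric P le \<mu> \<longrightarrow>
        expect P le \<mu> (ddeg le) = expect P le (uni P le) (ddeg le))"

end

theory Submission
  imports Defs
begin

locale gp =
  fixes P :: "'a set" and le :: "'a \<Rightarrow> 'a \<Rightarrow> bool" and r :: nat
  assumes fin: "finite P" and pos: "poset_on P le" and gr: "graded_of_rank P le r"
begin

lemma prefl: "x \<in> P \<Longrightarrow> le x x" using pos unfolding poset_on_def by blast
lemma pantisym: "x \<in> P \<Longrightarrow> y \<in> P \<Longrightarrow> le x y \<Longrightarrow> le y x \<Longrightarrow> x = y"
  using pos unfolding poset_on_def by blast
lemma ptrans: "x \<in> P \<Longrightarrow> y \<in> P \<Longrightarrow> z \<in> P \<Longrightarrow> le x y \<Longrightarrow> le y z \<Longrightarrow> le x z"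
  using pos unfolding poset_on_def by blast

lemma chain_fin: "is_chain P le C \<Longrightarrow> finite C"
  unfolding is_chain_def using fin finite_subset by blast

lemma chain_sub: "is_chain P le C \<Longrightarrow> D \<subseteq> C \<Longrightarrow> is_chain P le D"
  unfolding is_chain_def by blast

lemma chain_greatest:
  assumes "is_chain P le C" "C \<noteq> {}"
  shows "\<exists>x\<in>C. \<forall>y\<in>C. le y x"
proof -
  have inP: "C \<subseteq> P" using assms(1) unfolding is_chain_def by blast
  have tot: "\<forall>x\<in>C. \<forall>y\<in>C. le x y \<or> le y x" using assms(1) unfolding is_chain_def by blast
  have "F \<subseteq> C \<Longrightarrow> \<exists>x\<in>F. \<forall>y\<in>F. le y x" if "finite F" "F \<noteq> {}" for F
    using that
  proof (induction F rule: finite_ne_induct)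
    case (singleton a)
    then show ?case using inP prefl by blast
  next
    case (insert a F)
    then obtain m where m: "m \<in> F" "\<forall>y\<in>F. le y m" by blast
    have sub: "a \<in> C" "m \<in> C" "F \<subseteq> C" using insert m by auto
    show ?case
    proof (cases "le m a")
      case True
      have "\<forall>y\<in>insert a F. le y a"
      proof
        fix y assume "y \<in> insert a F"
        then show "le y a"
        proof
          assume "y = a" thus ?thesis using sub inP prefl by blast
        next
          assume "y \<in> F" thus ?thesis using m True sub inP ptrans[of y m a] by blast
        qed
      qed
      then show ?thesis by blast
    next
      case False
      hence "le a m" using tot sub by blast
      then show ?thesis using m by blast
    qed
  qed
  then show ?thesis using assms chain_fin by blast
qed

lemma chain_least:
  assumes "is_chain P le C" "C \<noteq> {}"
  shows "\<exists>x\<in>C. \<forall>y\<in>C. le x y"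
proof -
  have inP: "C \<subseteq> P" using assms(1) unfolding is_chain_def by blast
  have tot: "\<forall>x\<in>C. \<forall>y\<in>C. le x y \<or> le y x" using assms(1) unfolding is_chain_def by blast
  have "F \<subseteq> C \<Longrightarrow> \<exists>x\<in>F. \<forall>y\<in>F. le x y" if "finite F" "F \<noteq> {}" for F
    using that
  proof (induction F rule: finite_ne_induct)
    case (singleton a)
    then show ?case using inP prefl by blast
  next
    case (insert a F)
    then obtain m where m: "m \<in> F" "\<forall>y\<in>F. le m y" by blast
    have sub: "a \<in> C" "m \<in> C" "F \<subseteq> C" using insert m by auto
    show ?case
    proof (cases "le a m")
      case True
      have "\<forall>y\<in>insert a F. le a y"
      proof
        fix y assume "y \<in> insert a F"
        then show "le a y"
        proof
          assume "y = a" thus ?thesis using sub inP prefl by blast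
        next
          assume "y \<in> F" thus ?thesis using m True sub inP ptrans[of a m y] by blast
        qed
      qed
      then show ?thesis by blast
    next
      case False
      hence "le m a" using tot sub by blast
      then show ?thesis using m by blast
    qed
  qed
  then show ?thesis using assms chain_fin by blast
qed

definition "chs p = {C. is_chain P le C \<and> p \<in> C \<and> (\<forall>x\<in>C. le x p)}"
definition "h p = Max (card ` chs p)"

lemma chs_fin: "finite (chs p)"
  by (rule finite_subset[of _ "Pow P"]) (auto simp: chs_def is_chain_def fin)

lemma h_ge: "is_chain P le C \<Longrightarrow> p \<in> C \<Longrightarrow> \<forall>x\<in>C. le x p \<Longrightarrow> card C \<le> h p"
  unfolding h_def by (rule Max_ge) (simp add: chs_fin, auto simp: chs_def)

lemma single_chain: "p \<in> P \<Longrightarrow> is_chain P le {p}" by (auto simp: is_chain_def prefl)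

lemma h_obtain:
  assumes "p \<in> P"
  obtains C where "is_chain P le C" "p \<in> C" "\<forall>x\<in>C. le x p" "card C = h p"
proof -
  have "{p} \<in> chs p" using assms by (auto simp: chs_def single_chain prefl)
  hence "h p \<in> card ` chs p" unfolding h_def by (intro Max_in) (auto simp: chs_fin)
  then show ?thesis using that by (auto simp: chs_def)
qed

lemma h_pos: "p \<in> P \<Longrightarrow> 1 \<le> h p" using h_ge[of "{p}" p] single_chain prefl by auto

lemma max_chain_ext:
  assumes "is_chain P le C" shows "\<exists>D. is_maximal_chain P le D \<and> C \<subseteq> D"
proof -
  let ?S = "{D. is_chain P le D \<and> C \<subseteq> D}"
  have finS: "finite ?S" by (rule finite_subset[of _ "Pow P"]) (auto simp: is_chain_def fin)
  have "C \<in> ?S" using assms by auto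
  hence "Max (card ` ?S) \<in> card ` ?S" using finS by (intro Max_in) auto
  then obtain D where D: "D \<in> ?S" "card D = Max (card ` ?S)" by auto
  have "is_maximal_chain P le D"
    unfolding is_maximal_chain_def
  proof (intro conjI allI impI)
    show "is_chain P le D" using D by auto
    fix D' assume a: "is_chain P le D' \<and> D \<subseteq> D'"
    hence "D' \<in> ?S" using D by auto
    hence "card D' \<le> card D" using D finS by simp
    moreover have "finite D'" using a chain_fin by blast
    ultimately show "D' = D" using a card_seteq[of D' D] by blast
  qed
  thus ?thesis using D by auto
qed

lemma chain_card: "is_chain P le C \<Longrightarrow> card C \<le> r+1"
proof -
  assume c: "is_chain P le C"
  then obtain D where D: "is_maximal_chain P le D" "C \<subseteq> D" using max_chain_ext by blast
  have "finite D" using D chain_fin unfolding is_maximal_chain_def by blast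
  hence "card C \<le> card D" using D card_mono by blast
  thus ?thesis using gr D unfolding graded_of_rank_def by auto
qed

lemma h_le: "p \<in> P \<Longrightarrow> h p \<le> r+1" using h_obtain chain_card by metis

lemma h_mono:
  assumes "q \<in> P" "p \<in> P" "le q p" "q \<noteq> p" shows "h q < h p"
proof -
  obtain C where C: "is_chain P le C" "q \<in> C" "\<forall>x\<in>C. le x q" "card C = h q"
    using h_obtain assms(1) by blast
  have CP: "C \<subseteq> P" using C unfolding is_chain_def by auto
  have pC: "p \<notin> C" using C assms pantisym by metis
  have below: "\<forall>x\<in>insert p C. le x p" using C assms CP ptrans prefl by blast
  have ch: "is_chain P le (insert p C)" unfolding is_chain_def
    using C below assms CP unfolding is_chain_def by blast
  have "card (insert p C) \<le> h p" using h_ge ch below by auto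
  thus ?thesis using pC chain_fin C by simp
qed

lemma h_down:
  assumes "p \<in> P" "2 \<le> h p" shows "\<exists>y\<in>P. le y p \<and> y \<noteq> p \<and> h p - 1 \<le> h y"
proof -
  obtain C where C: "is_chain P le C" "p \<in> C" "\<forall>x\<in>C. le x p" "card C = h p"
    using h_obtain assms(1) by blast
  have fC: "finite C" using chain_fin C by blast
  have c': "card (C - {p}) = h p - 1" using C fC by simp
  have "card (C - {p}) \<noteq> 0" using c' assms by simp
  hence ne: "C - {p} \<noteq> {}" by (metis card.empty)
  have ch: "is_chain P le (C - {p})" using chain_sub C by blast
  obtain y where y: "y \<in> C - {p}" "\<forall>z\<in>C - {p}. le z y" using chain_greatest[OF ch ne] by blast
  have "card (C - {p}) \<le> h y" using h_ge[OF ch] y by blast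
  moreover have "y \<in> P" using y C unfolding is_chain_def by auto
  ultimately show ?thesis using y C c' by auto
qed

lemma h_up:
  assumes "p \<in> P" "h p < r+1" shows "\<exists>y\<in>P. le p y \<and> y \<noteq> p \<and> h y = h p + 1"
proof -
  obtain C where C: "is_chain P le C" "p \<in> C" "\<forall>x\<in>C. le x p" "card C = h p"
    using h_obtain assms(1) by blast
  obtain D where D: "is_maximal_chain P le D" "C \<subseteq> D" using max_chain_ext C(1) by blast
  have Dch: "is_chain P le D" using D(1) unfolding is_maximal_chain_def by blast
  have cD: "card D = r+1" using gr D(1) unfolding graded_of_rank_def by blast
  have DP: "D \<subseteq> P" using Dch unfolding is_chain_def by auto
  have fD: "finite D" using chain_fin[OF Dch] .
  let ?L = "{x\<in>D. le x p}"
  have Lch: "is_chain P le ?L" by (rule chain_sub[OF Dch]) auto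
  have pL: "p \<in> ?L" using C(2,3) D(2) by auto
  have cL: "card ?L \<le> h p" by (rule h_ge[OF Lch pL]) simp
  have CsL: "C \<subseteq> ?L" using C(3) D(2) by blast
  have fL: "finite ?L" using fD by simp
  have CL: "C = ?L" using card_seteq[OF fL CsL] C(4) cL by simp
  let ?U = "D - C"
  have fC: "finite C" using C(1) chain_fin by blast
  have cU: "card ?U = r+1 - h p" using card_Diff_subset[OF fC D(2)] C(4) cD by simp
  hence "card ?U \<noteq> 0" using assms by simp
  hence Une: "?U \<noteq> {}" by (metis card.empty)
  have Uch: "is_chain P le ?U" by (rule chain_sub[OF Dch]) auto
  obtain y where y: "y \<in> ?U" "\<forall>z\<in>?U. le y z" using chain_least[OF Uch Une] by blast
  have yP: "y \<in> P" using y DP by auto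
  have yD: "y \<in> D" and nyp: "\<not> le y p" using y CL by auto
  have pD: "p \<in> D" using C D by auto
  have lpy: "le p y" using Dch yD pD nyp unfolding is_chain_def by blast
  have ynp: "y \<noteq> p" using y C by auto
  have "h p < h y" using h_mono assms(1) yP lpy ynp by blast
  moreover have "h y \<le> h p + 1"
  proof -
    obtain E where E: "is_chain P le E" "y \<in> E" "\<forall>x\<in>E. le x y" "card E = h y"
      using h_obtain yP by blast
    have EP: "E \<subseteq> P" using E(1) unfolding is_chain_def by auto
    let ?U' = "?U - {y}"
    have ch: "is_chain P le (E \<union> ?U')" unfolding is_chain_def
    proof (intro conjI ballI)
      show "E \<union> ?U' \<subseteq> P" using EP DP by auto
      fix a b assume a: "a \<in> E \<union> ?U'" and b: "b \<in> E \<union> ?U'"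
      show "le a b \<or> le b a"
      proof (cases "a \<in> E")
        case aE: True
        show ?thesis
        proof (cases "b \<in> E")
          case True thus ?thesis using aE E unfolding is_chain_def by blast
        next
          case False
          hence "b \<in> ?U'" using b by auto
          hence "le y b" "b \<in> P" using y DP by auto
          thus ?thesis using aE E EP yP ptrans[of a y b] by blast
        qed
      next
        case aU: False
        hence aU': "a \<in> ?U'" using a by auto
        show ?thesis
        proof (cases "b \<in> E")
          case True
          have "le y a" "a \<in> P" using aU' y DP by auto
          thus ?thesis using True E EP yP ptrans[of b y a] by blast
        next
          case False
          hence "b \<in> ?U'" using b by auto
          thus ?thesis using aU' Dch unfolding is_chain_def by blast
        qed
      qed
    qed
    have disj: "E \<inter> ?U' = {}"
    proof (rule ccontr)
      assume "E \<inter> ?U' \<noteq> {}"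
      then obtain z where z: "z \<in> E" "z \<in> ?U'" by blast
      have "le z y" "le y z" "z \<in> P" using z E y DP by auto
      thus False using pantisym yP z by blast
    qed
    have fE: "finite E" using chain_fin E by blast
    have "card (E \<union> ?U') = card E + card ?U'" using card_Un_disjoint[OF fE _ disj] fD by auto
    moreover have "card (E \<union> ?U') \<le> r+1" using chain_card ch by blast
    moreover have "card ?U' = card ?U - 1" using y fD by auto
    ultimately show ?thesis using cU E assms by linarith
  qed
  ultimately show ?thesis using yP lpy ynp by auto
qed

definition "Ik k = {q\<in>P. h q \<le> k}"

lemma Ik_ideal: "Ik k \<in> order_ideals P le"
proof -
  have "\<forall>x\<in>Ik k. \<forall>y\<in>P. le y x \<longrightarrow> y \<in> Ik k"
  proof (intro ballI impI)
    fix x y assume x: "x \<in> Ik k" and y: "y \<in> P" and l: "le y x"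
    have xP: "x \<in> P" "h x \<le> k" using x unfolding Ik_def by auto
    show "y \<in> Ik k"
    proof (cases "y = x")
      case False thus ?thesis using h_mono[OF y xP(1) l False] xP y unfolding Ik_def by auto
    qed (use x in auto)
  qed
  thus ?thesis unfolding order_ideals_def Ik_def by auto
qed

lemma maxI: "k \<le> r+1 \<Longrightarrow> maximal_elems le (Ik k) = {p\<in>P. h p = k}"
proof (intro equalityI subsetI)
  fix p assume k: "k \<le> r+1" and p: "p \<in> maximal_elems le (Ik k)"
  hence pP: "p \<in> P" "h p \<le> k" and mx: "\<forall>y\<in>Ik k. le p y \<longrightarrow> y = p"
    unfolding maximal_elems_def Ik_def by auto
  have "h p = k"
  proof (rule ccontr)
    assume "h p \<noteq> k"
    hence "h p < r+1" using pP k by auto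
    then obtain y where "y \<in> P" "le p y" "y \<noteq> p" "h y = h p + 1" using h_up pP by blast
    moreover have "h p + 1 \<le> k" using pP \<open>h p \<noteq> k\<close> by auto
    ultimately show False using mx unfolding Ik_def by auto
  qed
  thus "p \<in> {p\<in>P. h p = k}" using pP by auto
next
  fix p assume k: "k \<le> r+1" and p: "p \<in> {p\<in>P. h p = k}"
  show "p \<in> maximal_elems le (Ik k)" unfolding maximal_elems_def Ik_def
    using p h_mono[of p] by force
qed

lemma Tminus: "k \<le> r+1 \<Longrightarrow> toggle_minus le p (Ik k) = (if p \<in> P \<and> h p = k then 1 else 0)"
  unfolding toggle_minus_def using maxI by (auto simp: Ik_def)

lemma Tplus: "p \<in> P \<Longrightarrow> toggle_plus P le p (Ik k) = (if h p = k+1 then 1 else 0)"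
proof -
  assume pP: "p \<in> P"
  have "(p \<notin> Ik k \<and> p \<in> minimal_elems le (P - Ik k)) \<longleftrightarrow> h p = k+1"
  proof
    assume a: "p \<notin> Ik k \<and> p \<in> minimal_elems le (P - Ik k)"
    hence hk: "k < h p" using pP unfolding Ik_def by auto
    have mn: "\<forall>y\<in>P - Ik k. le y p \<longrightarrow> y = p" using a unfolding minimal_elems_def by auto
    show "h p = k+1"
    proof (rule ccontr)
      assume "h p \<noteq> k+1"
      hence "2 \<le> h p" "k + 1 \<le> h p - 1" using hk by auto
      then obtain y where "y \<in> P" "le y p" "y \<noteq> p" "h p - 1 \<le> h y" using h_down pP by blast
      thus False using mn \<open>k + 1 \<le> h p - 1\<close> unfolding Ik_def by auto
    qed
  next
    assume e: "h p = k+1"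
    show "p \<notin> Ik k \<and> p \<in> minimal_elems le (P - Ik k)"
      unfolding minimal_elems_def Ik_def using pP e h_mono[of _ p] by force
  qed
  thus ?thesis unfolding toggle_plus_def by simp
qed

definition "mu I = real (card {k\<in>{0..r+1}. Ik k = I}) / real (r+2)"

lemma finJ: "finite (order_ideals P le)"
  by (rule finite_subset[of _ "Pow P"]) (auto simp: order_ideals_def fin)

lemma expect_mu: "expect P le mu f = (\<Sum>k\<in>{0..r+1}. f (Ik k)) / real (r+2)"
proof -
  have "(\<Sum>k\<in>{0..r+1}. f (Ik k)) =
        (\<Sum>I\<in>order_ideals P le. \<Sum>k\<in>{k. k \<in> {0..r+1} \<and> Ik k = I}. f (Ik k))"
    by (rule sum.group[symmetric]) (auto simp: finJ Ik_ideal)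
  also have "\<dots> = (\<Sum>I\<in>order_ideals P le. f I * real (card {k\<in>{0..r+1}. Ik k = I}))"
  proof (rule sum.cong)
    fix I
    have "(\<Sum>k\<in>{k. k \<in> {0..r+1} \<and> Ik k = I}. f (Ik k)) = (\<Sum>k\<in>{k. k \<in> {0..r+1} \<and> Ik k = I}. f I)"
      by (rule sum.cong) auto
    thus "(\<Sum>k\<in>{k. k \<in> {0..r+1} \<and> Ik k = I}. f (Ik k)) = f I * real (card {k\<in>{0..r+1}. Ik k = I})"
      by simp
  qed simp
  finally show ?thesis unfolding expect_def mu_def
    by (simp add: sum_divide_distrib)
qed

lemma ts_sum: "p \<in> P \<Longrightarrow> (\<Sum>k\<in>{0..r+1}. (if p \<in> P \<and> h p = k then 1 else 0 :: real)) = 1"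
proof -
  assume pP: "p \<in> P"
  have "(\<Sum>k\<in>{0..r+1}. (if p \<in> P \<and> h p = k then 1 else 0 :: real)) = (\<Sum>k\<in>{0..r+1}. (if k = h p then 1 else 0 :: real))"
    using pP by (intro sum.cong) auto
  also have "\<dots> = 1" using h_le[OF pP] by (simp add: sum.delta)
  finally show ?thesis .
qed

lemma tp_sum: "p \<in> P \<Longrightarrow> (\<Sum>k\<in>{0..r+1}. (if h p = k+1 then 1 else 0 :: real)) = 1"
proof -
  assume pP: "p \<in> P"
  have "(\<Sum>k\<in>{0..r+1}. (if h p = k+1 then 1 else 0 :: real)) = (\<Sum>k\<in>{0..r+1}. (if k = h p - 1 then 1 else 0 :: real))"
    using h_pos[OF pP] by (intro sum.cong) auto
  also have "\<dots> = 1" using h_le[OF pP] h_pos[OF pP] by (simp add: sum.delta)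
  finally show ?thesis .
qed

lemma dist: "is_distribution P le mu"
proof -
  have "(\<Sum>I\<in>order_ideals P le. mu I) = expect P le mu (\<lambda>_. 1)" unfolding expect_def by simp
  also have "\<dots> = 1" by (simp add: expect_mu)
  finally show ?thesis unfolding is_distribution_def mu_def by auto
qed

lemma tsym: "toggle_symmetric P le mu"
  unfolding toggle_symmetric_def
proof
  fix p assume pP: "p \<in> P"
  have "expect P le mu (toggle_plus P le p) = 1 / real (r+2)"
    using expect_mu Tplus[OF pP] tp_sum[OF pP] by simp
  moreover have "expect P le mu (toggle_minus le p) = 1 / real (r+2)"
  proof -
    have "(\<Sum>k\<in>{0..r+1}. toggle_minus le p (Ik k)) = (\<Sum>k\<in>{0..r+1}. (if p \<in> P \<and> h p = k then 1 else 0 :: real))"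
      by (intro sum.cong) (auto simp: Tminus)
    thus ?thesis using expect_mu ts_sum[OF pP] by simp
  qed
  ultimately show "expect P le mu (toggle_plus P le p) = expect P le mu (toggle_minus le p)" by simp
qed

lemma ddeg_mu: "expect P le mu (ddeg le) = real (card P) / real (r+2)"
proof -
  have "(\<Sum>k\<in>{0..r+1}. ddeg le (Ik k)) = (\<Sum>k\<in>{0..r+1}. real (card {p\<in>P. h p = k}))"
    by (intro sum.cong) (auto simp: ddeg_def maxI)
  also have "\<dots> = (\<Sum>k\<in>{0..r+1}. \<Sum>p\<in>{p. p \<in> P \<and> h p = k}. (1::real))" by simp
  also have "\<dots> = (\<Sum>p\<in>P. (1::real))"
    by (rule sum.group) (auto simp: fin dest: h_le)
  finally show ?thesis using expect_mu by simp
qed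

end

theorem proposition3p8:
  fixes P :: "'a set" and le :: "'a \<Rightarrow> 'a \<Rightarrow> bool" and r :: nat
  assumes "finite P" and "poset_on P le" and "graded_of_rank P le r"
    and "tCDE P le"
  shows "expect P le (uni P le) (ddeg le) = real (card P) / real (r + 2)"
proof -
  interpret gp P le r using assms by unfold_locales
  show ?thesis using assms(4) dist tsym ddeg_mu unfolding tCDE_def by metis
qed

end
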